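(* Let $G=(V,E)$ be a temporal network with $m=|E|$ temporal edges, let $\alpha$ be the degeneracy of $G_S$, let $\pi$ be a degeneracy ordering of $G_S$, and let $\delta\ge 0$. Consider the procedure OutNeighbours, which for every pair $(u,v)$ with $\{u,v\}\in E(G_S)$ and $\pi(u)<\pi(v)$, and every $w\in N^{+}_{\pi}(u)$ adjacent to $v$, does the following: (i) with $L_1=E_{u,v}$, $L_2=E_{u,w}$, $L_3=E_{v,w}$, it computes for every $e\in L_1$ the first edge $L_{12}[e]$ of $L_2$ with timestamp at least $t(e)$ by a single merged linear scan of $L_1$ and $L_2$, computes for every $f\in L_2$ the first edge $L_{23}[f]$ of $L_3$ with timestamp at least $t(f)$ by binary search in $L_3$, and for each $e\in L_1$ increments out-count$[e]$ if $t(e)\le t(L_{12}[e])\le t(L_{23}[L_{12}[e]])\le t(e)+\delta$; (ii) with $L_1'=E_{v,u}$, $L_2'=E_{v,w}$, $L_3'=E_{u,w}$, it computes for every $e\in L_1'$ the last edge $L_{13}[e]$ of $L_3'$ with timestamp at most $t(e)+\delta$ by a single merged linear scan of $L_1'$ and $L_3'$, computes the first edge $L_{12}[e]$ of $L_2'$ with timestamp at least $t(e)$ by binary search in $L_2'$, and increments out-count$[e]$ if $t(e)\le t(L_{12}[e])\le t(L_{13}[e])\le t(e)+\delta$. Then OutNeighbours runs in time $O(m\,\alpha\log\sigma_{\max})$.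
   Context: A temporal network $G=(V,E)$ is a finite multiset of temporal edges $(x,y,t)$ with $x\neq y\in V$ and timestamp $t=t(e)\in\mathbb{R}$ (from $x$ to $y$; parallel edges in both directions allowed). For distinct $x,y$, $E_{x,y}$ is the list of temporal edges from $x$ to $y$ sorted by increasing timestamp, and $\sigma(x,y)$ is the number of temporal edges with endpoints $x$ and $y$ (either direction); $\sigma_{\max}=\max_{x,y}\sigma(x,y)$. $G_S$ is the simple undirected graph on $V$ with $\{x,y\}$ an edge iff some temporal edge joins $x$ and $y$; $N(x)$ is the neighbourhood of $x$ in $G_S$. For an ordering $\pi$ of $V$, $N^{+}_{\pi}(x)=\{y\in N(x):\pi(x)<\pi(y)\}$. The degeneracy $\alpha$ of $G_S$ is the smallest integer such that some ordering $\pi$ of $V$ satisfies $|N^{+}_{\pi}(x)|\le\alpha$ for all $x$; such an ordering is a degeneracy ordering. Computational model: each list $E_{x,y}$ can be accessed in $O(1)$ time and adjacency in $G_S$ can be tested in $O(1)$ time. *)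

theory Defs
  imports Complex_Main "HOL-Library.Multiset"
begin

type_synonym tedge = "nat \<times> nat \<times> real"

definition temporal_network :: "nat set \<Rightarrow> tedge multiset \<Rightarrow> bool" where
  "temporal_network V E \<longleftrightarrow> finite V \<and>
     (\<forall>(x, y, t) \<in># E. x \<noteq> y \<and> x \<in> V \<and> y \<in> V)"

text \<open>E_{x,y}: the timestamps of the temporal edges from x to y, sorted increasingly.
  An edge of E_{x,y} is identified with its position in this list.\<close>
definition Elist :: "tedge multiset \<Rightarrow> nat \<Rightarrow> nat \<Rightarrow> real list" where
  "Elist E x y = sorted_list_of_multiset
      (image_mset (\<lambda>(a, b, t). t) (filter_mset (\<lambda>(a, b, t). a = x \<and> b = y) E))"

definition sigma :: "tedge multiset \<Rightarrow> nat \<Rightarrow> nat \<Rightarrow> nat" where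
  "sigma E x y = size (filter_mset (\<lambda>(a, b, t). (a = x \<and> b = y) \<or> (a = y \<and> b = x)) E)"

definition sigma_max :: "nat set \<Rightarrow> tedge multiset \<Rightarrow> nat" where
  "sigma_max V E = Max (insert 0 {sigma E x y | x y. x \<in> V \<and> y \<in> V \<and> x \<noteq> y})"

definition adj :: "tedge multiset \<Rightarrow> nat \<Rightarrow> nat \<Rightarrow> bool" where
  "adj E x y \<longleftrightarrow> x \<noteq> y \<and> sigma E x y > 0"

definition Nplus :: "nat set \<Rightarrow> tedge multiset \<Rightarrow> (nat \<Rightarrow> nat) \<Rightarrow> nat \<Rightarrow> nat set" where
  "Nplus V E \<pi> x = {y \<in> V. adj E x y \<and> \<pi> x < \<pi> y}"

definition degeneracy :: "nat set \<Rightarrow> tedge multiset \<Rightarrow> nat" where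
  "degeneracy V E = (LEAST k. \<exists>\<pi>. inj_on \<pi> V \<and> (\<forall>x\<in>V. card (Nplus V E \<pi> x) \<le> k))"

definition degeneracy_ordering :: "nat set \<Rightarrow> tedge multiset \<Rightarrow> (nat \<Rightarrow> nat) \<Rightarrow> bool" where
  "degeneracy_ordering V E \<pi> \<longleftrightarrow> inj_on \<pi> V \<and>
     (\<forall>x\<in>V. card (Nplus V E \<pi> x) \<le> degeneracy V E)"

text \<open>Merged linear scan: for each element of the sorted list L1, the index of the first
  element of the sorted list L2 that is \<ge> it (length L2 if none); second component = steps.\<close>
fun scan_geq :: "real list \<Rightarrow> real list \<Rightarrow> nat \<Rightarrow> nat list \<times> nat" where
  "scan_geq [] ys i = ([], 1)"
| "scan_geq (x # xs) [] i = (let (r, c) = scan_geq xs [] i in (i # r, c + 1))"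
| "scan_geq (x # xs) (y # ys) i =
     (if x \<le> y then (let (r, c) = scan_geq xs (y # ys) i in (i # r, c + 1))
      else (let (r, c) = scan_geq (x # xs) ys (Suc i) in (r, c + 1)))"

text \<open>Merged linear scan: for each x of L1, the number k of elements of L3 that are
  \<le> x + d; the last such edge has index k - 1 (none if k = 0).\<close>
fun scan_leq :: "real \<Rightarrow> real list \<Rightarrow> real list \<Rightarrow> nat \<Rightarrow> nat list \<times> nat" where
  "scan_leq d [] ys i = ([], 1)"
| "scan_leq d (x # xs) [] i = (let (r, c) = scan_leq d xs [] i in (i # r, c + 1))"
| "scan_leq d (x # xs) (y # ys) i =
     (if y \<le> x + d then (let (r, c) = scan_leq d (x # xs) ys (Suc i) in (r, c + 1))
      else (let (r, c) = scan_leq d xs (y # ys) i in (i # r, c + 1)))"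

text \<open>Binary search in the index range [lo, hi) of a sorted list for the first element \<ge> t;
  second component = steps.\<close>
function bs_geq :: "real list \<Rightarrow> real \<Rightarrow> nat \<Rightarrow> nat \<Rightarrow> nat \<times> nat" where
  "bs_geq L t lo hi =
     (if hi \<le> lo then (lo, 1)
      else (let mid = (lo + hi) div 2 in
            if t \<le> L ! mid then (let (r, c) = bs_geq L t lo mid in (r, c + 1))
            else (let (r, c) = bs_geq L t (Suc mid) hi in (r, c + 1))))"
  by pat_completeness auto
termination by (relation "measure (\<lambda>(L, t, lo, hi). hi - lo)") auto

text \<open>Step (i): returns, for every e in L1, whether out-count[e] is incremented, and the cost.\<close>
definition proc_i :: "real \<Rightarrow> real list \<Rightarrow> real list \<Rightarrow> real list \<Rightarrow> bool list \<times> nat" where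
  "proc_i d L1 L2 L3 =
     (let (L12, c1) = scan_geq L1 L2 0;
          bsr = map (\<lambda>f. bs_geq L3 f 0 (length L3)) L2;
          L23 = map fst bsr;
          c2 = sum_list (map snd bsr);
          inc = map (\<lambda>(te, j). j < length L2 \<and> L23 ! j < length L3 \<and> te \<le> L2 ! j \<and>
                        L2 ! j \<le> L3 ! (L23 ! j) \<and> L3 ! (L23 ! j) \<le> te + d) (zip L1 L12)
      in (inc, c1 + c2 + length L1 + 1))"

definition proc_ii :: "real \<Rightarrow> real list \<Rightarrow> real list \<Rightarrow> real list \<Rightarrow> bool list \<times> nat" where
  "proc_ii d L1 L2 L3 =
     (let (L13, c1) = scan_leq d L1 L3 0;
          bsr = map (\<lambda>e. bs_geq L2 e 0 (length L2)) L1;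
          L12 = map fst bsr;
          c2 = sum_list (map snd bsr);
          inc = map (\<lambda>(te, k, j). j < length L2 \<and> 0 < k \<and> te \<le> L2 ! j \<and>
                        L2 ! j \<le> L3 ! (k - 1) \<and> L3 ! (k - 1) \<le> te + d) (zip L1 (zip L13 L12))
      in (inc, c1 + c2 + length L1 + 1))"

text \<open>Total running time of OutNeighbours: for each ordered adjacent pair (u,v) with
  pi u < pi v one step, plus one O(1) adjacency test for every w in N+(u), plus the costs
  of steps (i) and (ii) for every w in N+(u) adjacent to v.\<close>
definition outneighbours_cost :: "nat set \<Rightarrow> tedge multiset \<Rightarrow> (nat \<Rightarrow> nat) \<Rightarrow> real \<Rightarrow> nat" where
  "outneighbours_cost V E \<pi> d =
     (\<Sum>(u, v) \<in> {(u, v). u \<in> V \<and> v \<in> V \<and> adj E u v \<and> \<pi> u < \<pi> v}.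
        1 + card (Nplus V E \<pi> u) +
        (\<Sum>w \<in> {w \<in> Nplus V E \<pi> u. adj E v w}.
           snd (proc_i d (Elist E u v) (Elist E u w) (Elist E v w)) +
           snd (proc_ii d (Elist E v u) (Elist E v w) (Elist E u w))))"

end

theory Submission
  imports Defs
begin

lemma scan_geq_cost: "snd (scan_geq xs ys i) \<le> length xs + length ys + 1"
  by (induction xs ys i rule: scan_geq.induct) (auto split: prod.splits)
lemma scan_leq_cost: "snd (scan_leq d xs ys i) \<le> length xs + length ys + 1"
  by (induction d xs ys i rule: scan_leq.induct) (auto split: prod.splits)
declare bs_geq.simps[simp del]
lemma bs_cost: "hi - lo < 2^K \<Longrightarrow> snd (bs_geq L t lo hi) \<le> 1 + K"
proof (induction L t lo hi arbitrary: K rule: bs_geq.induct)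
  case (1 L t lo hi)
  show ?case
  proof (cases "hi \<le> lo")
    case True then show ?thesis by (subst bs_geq.simps) simp
  next
    case False
    then obtain K' where K: "K = Suc K'" using "1.prems" by (cases K) auto
    define mid where "mid = (lo + hi) div 2"
    have a: "mid - lo < 2^K'" "hi - Suc mid < 2^K'" using "1.prems" False K unfolding mid_def by auto
    have b: "t \<le> L ! mid \<Longrightarrow> snd (bs_geq L t lo mid) \<le> 1 + K'" using "1.IH"(1)[OF False mid_def] a by auto
    have c: "\<not> t \<le> L ! mid \<Longrightarrow> snd (bs_geq L t (Suc mid) hi) \<le> 1 + K'" using "1.IH"(2)[OF False mid_def] a by auto
    have e: "bs_geq L t lo hi = (if t \<le> L ! mid then (let (r, c) = bs_geq L t lo mid in (r, c + 1))
            else (let (r, c) = bs_geq L t (Suc mid) hi in (r, c + 1)))"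
      using False unfolding mid_def by (subst bs_geq.simps) (simp add: Let_def)
    show ?thesis using b c K unfolding e by (auto split: prod.splits)
  qed
qed
lemma sum_list_le: "(\<And>x. f x \<le> (c::nat)) \<Longrightarrow> sum_list (map f xs) \<le> length xs * c"
  by (induction xs) (auto simp: add_mono)
lemma proc_i_cost: "length L3 < 2^K \<Longrightarrow>
  snd (proc_i d L1 L2 L3) \<le> 2*length L1 + length L2 + 2 + length L2 * (1+K)"
proof -
  assume h: "length L3 < 2^K"
  have "sum_list (map (\<lambda>f. snd (bs_geq L3 f 0 (length L3))) L2) \<le> length L2 * (1+K)"
    by (rule sum_list_le) (metis bs_cost h diff_zero)
  moreover have "snd (scan_geq L1 L2 0) \<le> length L1 + length L2 + 1" by (rule scan_geq_cost)
  ultimately show ?thesis unfolding proc_i_def by (auto simp: Let_def o_def split: prod.splits)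
qed
lemma proc_ii_cost: "length L2 < 2^K \<Longrightarrow>
  snd (proc_ii d L1 L2 L3) \<le> 2*length L1 + length L3 + 2 + length L1 * (1+K)"
proof -
  assume h: "length L2 < 2^K"
  have "sum_list (map (\<lambda>f. snd (bs_geq L2 f 0 (length L2))) L1) \<le> length L1 * (1+K)"
    by (rule sum_list_le) (metis bs_cost h diff_zero)
  moreover have "snd (scan_leq d L1 L3 0) \<le> length L1 + length L3 + 1" by (rule scan_leq_cost)
  ultimately show ?thesis unfolding proc_ii_def by (auto simp: Let_def o_def split: prod.splits)
qed
lemma logK: assumes "(n::nat) \<ge> 1" shows "n < 2^(nat \<lfloor>log 2 n\<rfloor> + 1)" "real (nat \<lfloor>log 2 n\<rfloor>) \<le> log 2 n"
proof -
  have l0: "log 2 n \<ge> 0" using assms by simp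
  define k where "k = nat \<lfloor>log 2 n\<rfloor>"
  have kk: "real k = of_int \<lfloor>log 2 n\<rfloor>" using l0 unfolding k_def by simp
  have "log 2 n < real k + 1" using kk by linarith
  then have "2 powr log 2 n < 2 powr (real k + 1)" by simp
  also have "2 powr (real k + 1) = 2 ^ (k+1)" using powr_realpow[of 2 "k+1"] by (simp add: add.commute)
  finally have "real n < 2 ^ (k + 1)" using assms by simp
  then show "n < 2^(nat \<lfloor>log 2 n\<rfloor> + 1)" unfolding k_def by (metis of_nat_less_iff of_nat_numeral of_nat_power)
  show "real (nat \<lfloor>log 2 n\<rfloor>) \<le> log 2 n" using l0 by linarith
qed

lemma len_sl: "length (sorted_list_of_multiset M) = size M"
proof -
  have "size (mset (sorted_list_of_multiset M)) = size M" by (simp only: mset_sorted_list_of_multiset)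
  then show ?thesis by (simp only: size_mset)
qed
lemma len_Elist: "length (Elist E x y) = size (filter_mset (\<lambda>(a,b,t). a=x \<and> b=y) E)"
  unfolding Elist_def len_sl by simp
lemma size_filter_disj: "size (filter_mset P M) + size (filter_mset Q M) = size (filter_mset (\<lambda>x. P x \<or> Q x) M) + size (filter_mset (\<lambda>x. P x \<and> Q x) M)"
  by (induction M) auto
lemma size_filter_disj2: "(\<And>e. \<not>(P e \<and> Q e)) \<Longrightarrow> size (filter_mset P M) + size (filter_mset Q M) \<le> size (filter_mset (\<lambda>x. P x \<or> Q x) M)"
  by (induction M) auto
lemma len_sigma: "x \<noteq> y \<Longrightarrow> length (Elist E x y) + length (Elist E y x) \<le> sigma E x y"
proof -
  assume xy: "x \<noteq> y"
  define P where "P = (\<lambda>(a::nat,b::nat,t::real). a=x \<and> b=y)"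
  define Q where "Q = (\<lambda>(a::nat,b::nat,t::real). a=y \<and> b=x)"
  have "sigma E x y = size (filter_mset (\<lambda>e. P e \<or> Q e) E)"
    unfolding sigma_def P_def Q_def by (intro arg_cong[where f=size] filter_mset_cong) auto
  moreover have "\<And>e. \<not>(P e \<and> Q e)" using xy unfolding P_def Q_def by auto
  ultimately show ?thesis unfolding len_Elist P_def[symmetric] Q_def[symmetric]
    by (simp add: size_filter_disj2)
qed
lemma sigma_sym: "sigma E x y = sigma E y x"
  unfolding sigma_def by (intro arg_cong[where f=size] filter_mset_cong) auto
lemma sigma_le_max: "finite V \<Longrightarrow> x\<in>V \<Longrightarrow> y\<in>V \<Longrightarrow> x\<noteq>y \<Longrightarrow> sigma E x y \<le> sigma_max V E"
proof -
  assume a: "finite V" "x\<in>V" "y\<in>V" "x\<noteq>y"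
  have "{sigma E x y | x y. x \<in> V \<and> y \<in> V \<and> x \<noteq> y} \<subseteq> (\<lambda>(x,y). sigma E x y) ` (V \<times> V)" by auto
  then have "finite {sigma E x y | x y. x \<in> V \<and> y \<in> V \<and> x \<noteq> y}" using a(1) finite_subset by blast
  then show ?thesis unfolding sigma_max_def using a by (intro Max_ge) auto
qed
lemma sum_size_filter_le:
  assumes "finite P" "\<And>e. card {p\<in>P. Q p e} \<le> 1"
  shows "(\<Sum>p\<in>P. size (filter_mset (Q p) M)) \<le> size M"
proof (induction M)
  case empty then show ?case by simp
next
  case (add x M)
  have "(\<Sum>p\<in>P. size (filter_mset (Q p) (add_mset x M))) = (\<Sum>p\<in>P. size (filter_mset (Q p) M) + (if Q p x then 1 else 0))"
      by (intro sum.cong) auto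
  also have "\<dots> = (\<Sum>p\<in>P. size (filter_mset (Q p) M)) + (\<Sum>p\<in>P. if Q p x then 1 else 0)"
    by (rule sum.distrib)
  also have "(\<Sum>p\<in>P. if Q p x then 1 else 0) = card {p\<in>P. Q p x}"
    by (simp only: card_eq_sum sum.inter_filter[OF assms(1)])
  finally have "(\<Sum>p\<in>P. size (filter_mset (Q p) (add_mset x M))) = (\<Sum>p\<in>P. size (filter_mset (Q p) M)) + card {p\<in>P. Q p x}" .
  moreover have "size (add_mset x M) = Suc (size M)" by simp
  ultimately show ?case using add.IH assms(2)[of x] by linarith
qed

lemma sum_sigma_le:
  assumes "finite V"
  shows "(\<Sum>u\<in>V. \<Sum>v\<in>Nplus V E \<pi> u. sigma E u v) \<le> size E"
proof -
  define P where "P = Sigma V (Nplus V E \<pi>)"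
  define Q where "Q = (\<lambda>(u::nat,v::nat) (a::nat,b::nat,t::real). (a=u \<and> b=v) \<or> (a=v \<and> b=u))"
  have fin: "\<And>u. finite (Nplus V E \<pi> u)" using assms unfolding Nplus_def by auto
  have "(\<Sum>u\<in>V. \<Sum>v\<in>Nplus V E \<pi> u. sigma E u v) = (\<Sum>(u,v)\<in>P. sigma E u v)"
    unfolding P_def using assms fin by (simp add: sum.Sigma)
  also have "\<dots> = (\<Sum>p\<in>P. size (filter_mset (Q p) E))"
    unfolding sigma_def Q_def by (intro sum.cong) (auto simp: case_prod_beta)
  also have "\<dots> \<le> size E"
  proof (rule sum_size_filter_le)
    show "finite P" unfolding P_def using assms fin by auto
    fix e :: tedge
    obtain a b t where e: "e = (a,b,t)" by (cases e) auto
    have ord: "\<And>u v. (u,v)\<in>P \<Longrightarrow> \<pi> u < \<pi> v" unfolding P_def Nplus_def by auto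
    have "{p\<in>P. Q p e} \<subseteq> {(a,b)} \<or> {p\<in>P. Q p e} \<subseteq> {(b,a)}"
    proof (cases "\<pi> a < \<pi> b")
      case True
      have "{p\<in>P. Q p e} \<subseteq> {(a,b)}"
      proof
        fix p assume p: "p \<in> {p\<in>P. Q p e}"
        obtain u v where uv: "p = (u,v)" by (cases p)
        have "(a=u \<and> b=v) \<or> (a=v \<and> b=u)" "\<pi> u < \<pi> v" using p ord unfolding uv Q_def e by auto
        then show "p \<in> {(a,b)}" using True uv by auto
      qed
      then show ?thesis by blast
    next
      case False
      have "{p\<in>P. Q p e} \<subseteq> {(b,a)}"
      proof
        fix p assume p: "p \<in> {p\<in>P. Q p e}"
        obtain u v where uv: "p = (u,v)" by (cases p)
        have "(a=u \<and> b=v) \<or> (a=v \<and> b=u)" "\<pi> u < \<pi> v" using p ord unfolding uv Q_def e by auto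
        then show "p \<in> {(b,a)}" using False uv by auto
      qed
      then show ?thesis by blast
    qed
    then show "card {p\<in>P. Q p e} \<le> 1"
    proof (elim disjE)
      assume "{p\<in>P. Q p e} \<subseteq> {(a,b)}" then show ?thesis using card_mono[of "{(a,b)}" "{p\<in>P. Q p e}"] by simp
    next
      assume "{p\<in>P. Q p e} \<subseteq> {(b,a)}" then show ?thesis using card_mono[of "{(b,a)}" "{p\<in>P. Q p e}"] by simp
    qed
  qed
  finally show ?thesis .
qed


lemma lin: "(a::nat)+a' \<le> s \<Longrightarrow> b \<le> r \<Longrightarrow> 1 \<le> s \<Longrightarrow> x \<le> 2*a+b+2+p \<Longrightarrow>
     y \<le> 2*a'+b+2+q \<Longrightarrow> p+q \<le> t \<Longrightarrow> z = 6*(s+r) + t \<Longrightarrow> x+y \<le> z" by (simp add: algebra_simps)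

lemma triple_bound:
  fixes a a' b s r K :: nat
  assumes "a + a' \<le> s" "b \<le> r" "1 \<le> s"
    "x \<le> 2*a + b + 2 + b*(1+K)" "y \<le> 2*a' + b + 2 + a'*(1+K)"
  shows "x + y \<le> (7+K) * (s + r)"
proof -
  have X: "(a'+b)*(1+K) \<le> (s+r)*(1+K)" using assms by (intro mult_right_mono) auto
  have Y: "(7+K)*(s+r) = 6*(s+r) + (s+r)*(1+K)" by (simp add: algebra_simps)
  have Z: "b*(1+K) + a'*(1+K) = (a'+b)*(1+K)" by (simp add: algebra_simps)
  show ?thesis by (rule lin[OF assms(1,2,3,4,5) _ Y]) (use X Z in simp)
qed

lemma main:
  assumes tn: "temporal_network V E" and ord: "degeneracy_ordering V E \<pi>"
  shows "real (outneighbours_cost V E \<pi> d)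
     \<le> 20 * real (size E) * real (degeneracy V E) * max 1 (log 2 (real (sigma_max V E)))"
proof -
  have finV: "finite V" using tn unfolding temporal_network_def by auto
  define \<alpha> where "\<alpha> = degeneracy V E"
  define N where "N = Nplus V E \<pi>"
  define s where "s = sigma_max V E"
  define n where "n = max 1 s"
  define K where "K = nat \<lfloor>log 2 (real n)\<rfloor> + 1"
  define M where "M = 7 + K"
  define T where "T = (\<lambda>u. \<Sum>w\<in>N u. sigma E u w)"
  have n1: "n \<ge> 1" unfolding n_def by auto
  have sK: "s < 2^K" using logK(1)[OF n1] unfolding K_def n_def by auto
  have finN: "\<And>u. finite (N u)" using finV unfolding N_def Nplus_def by auto
  have cardN: "\<And>u. u \<in> V \<Longrightarrow> card (N u) \<le> \<alpha>"
    using ord unfolding degeneracy_ordering_def N_def \<alpha>_def by auto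
  have memN: "\<And>u v. v \<in> N u \<Longrightarrow> v \<in> V \<and> adj E u v \<and> \<pi> u < \<pi> v"
    unfolding N_def Nplus_def by auto
  have adjD: "\<And>u v. adj E u v \<Longrightarrow> u \<noteq> v \<and> 1 \<le> sigma E u v"
    unfolding adj_def by auto
  have lenK: "\<And>x y. x \<in> V \<Longrightarrow> y \<in> V \<Longrightarrow> x \<noteq> y \<Longrightarrow> length (Elist E x y) < 2^K"
  proof -
    fix x y assume "x \<in> V" "y \<in> V" "x \<noteq> y"
    then have "length (Elist E x y) \<le> s" using len_sigma[of x y E] sigma_le_max[OF finV, of x y E]
      unfolding s_def by linarith
    then show "length (Elist E x y) < 2^K" using sK by linarith
  qed
  define h where "h = (\<lambda>u v w. snd (proc_i d (Elist E u v) (Elist E u w) (Elist E v w)) +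
           snd (proc_ii d (Elist E v u) (Elist E v w) (Elist E u w)))"
  have tri: "h u v w \<le> M * (sigma E u v + sigma E u w)"
    if u: "u \<in> V" and v: "v \<in> N u" and w: "w \<in> N u" and vw: "adj E v w" for u v w
  proof -
    have vV: "v \<in> V" and uv: "adj E u v" using memN[OF v] by auto
    have wV: "w \<in> V" and uw: "adj E u w" using memN[OF w] by auto
    have c: "length (Elist E v w) < 2^K" using lenK[OF vV wV] adjD[OF vw] by auto
    have i: "snd (proc_i d (Elist E u v) (Elist E u w) (Elist E v w))
       \<le> 2*length (Elist E u v) + length (Elist E u w) + 2 + length (Elist E u w) * (1+K)"
      by (rule proc_i_cost[OF c])
    have ii: "snd (proc_ii d (Elist E v u) (Elist E v w) (Elist E u w))
       \<le> 2*length (Elist E v u) + length (Elist E u w) + 2 + length (Elist E v u) * (1+K)"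
      by (rule proc_ii_cost[OF c])
    have s1: "length (Elist E u v) + length (Elist E v u) \<le> sigma E u v"
      using len_sigma adjD[OF uv] by auto
    have s2: "length (Elist E u w) \<le> sigma E u w"
      using len_sigma[of u w E] adjD[OF uw] by auto
    show ?thesis unfolding h_def M_def
      by (rule triple_bound[OF s1 s2 _ i ii]) (use adjD[OF uv] in auto)
  qed
  define g where "g = (\<lambda>u v. 1 + card (Nplus V E \<pi> u) +
        (\<Sum>w \<in> {w \<in> Nplus V E \<pi> u. adj E v w}.
           snd (proc_i d (Elist E u v) (Elist E u w) (Elist E v w)) +
           snd (proc_ii d (Elist E v u) (Elist E v w) (Elist E u w))))"
  have pairs: "{(u, v). u \<in> V \<and> v \<in> V \<and> adj E u v \<and> \<pi> u < \<pi> v} = Sigma V N"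
    unfolding N_def Nplus_def by auto
  have cost: "outneighbours_cost V E \<pi> d = (\<Sum>u\<in>V. \<Sum>v\<in>N u. g u v)"
    unfolding outneighbours_cost_def g_def[symmetric] pairs
    using finV finN by (simp add: sum.Sigma)
  have gb: "g u v \<le> 2*\<alpha>*sigma E u v + M * (card (N u) * sigma E u v) + M * T u"
    if u: "u \<in> V" and v: "v \<in> N u" for u v
  proof -
    have uv: "adj E u v" using memN[OF v] by auto
    have c1: "1 \<le> card (N u)" using v finN[of u] by (metis One_nat_def Suc_leI card_gt_0_iff empty_iff)
    have a: "1 + card (N u) \<le> 2*\<alpha>*sigma E u v"
    proof -
      have "1 + card (N u) \<le> 2*\<alpha>" using c1 cardN[OF u] by linarith
      also have "\<dots> \<le> 2*\<alpha>*sigma E u v" using adjD[OF uv] by simp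
      finally show ?thesis .
    qed
    have "(\<Sum>w \<in> {w \<in> N u. adj E v w}. h u v w) \<le> (\<Sum>w \<in> {w \<in> N u. adj E v w}. M * (sigma E u v + sigma E u w))"
      by (intro sum_mono tri[OF u v]) auto
    also have "\<dots> \<le> (\<Sum>w \<in> N u. M * (sigma E u v + sigma E u w))"
      by (intro sum_mono2 finN) auto
    also have "\<dots> = M * (card (N u) * sigma E u v) + M * T u"
      unfolding T_def by (simp add: sum.distrib sum_distrib_left[symmetric] algebra_simps)
    finally have b: "(\<Sum>w \<in> {w \<in> N u. adj E v w}. h u v w) \<le> M * (card (N u) * sigma E u v) + M * T u" .
    show ?thesis using a b unfolding g_def h_def N_def[symmetric] by linarith
  qed
  have ub: "(\<Sum>v\<in>N u. g u v) \<le> (2 + 2*M) * \<alpha> * T u" if u: "u \<in> V" for u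
  proof -
    have "(\<Sum>v\<in>N u. g u v) \<le> (\<Sum>v\<in>N u. 2*\<alpha>*sigma E u v + M * (card (N u) * sigma E u v) + M * T u)"
      by (intro sum_mono gb[OF u])
    also have "\<dots> = 2*\<alpha>*T u + M * card (N u) * T u + card (N u) * (M * T u)"
      unfolding T_def by (simp add: sum.distrib sum_distrib_left[symmetric] algebra_simps)
    also have "\<dots> \<le> 2*\<alpha>*T u + M * \<alpha> * T u + \<alpha> * (M * T u)"
      using cardN[OF u] by (intro add_mono mult_right_mono mult_left_mono) auto
    also have "\<dots> = (2 + 2*M) * \<alpha> * T u" by (simp add: algebra_simps)
    finally show ?thesis .
  qed
  have "outneighbours_cost V E \<pi> d \<le> (\<Sum>u\<in>V. (2 + 2*M) * \<alpha> * T u)"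
    unfolding cost by (intro sum_mono ub)
  also have "\<dots> = (2 + 2*M) * \<alpha> * (\<Sum>u\<in>V. T u)" by (simp add: sum_distrib_left)
  also have "\<dots> \<le> (2 + 2*M) * \<alpha> * size E"
    using sum_sigma_le[OF finV, of E \<pi>] unfolding T_def N_def by (intro mult_left_mono) auto
  finally have nat_bound: "outneighbours_cost V E \<pi> d \<le> (2 + 2*M) * \<alpha> * size E" .
  define l where "l = max 1 (log 2 (real s))"
  have l1: "1 \<le> l" unfolding l_def by auto
  have logn: "log 2 (real n) \<le> l"
  proof (cases "s = 0")
    case True then show ?thesis unfolding n_def l_def by simp
  next
    case False then have "n = s" unfolding n_def by simp
    then show ?thesis unfolding l_def by simp
  qed
  have "real K \<le> log 2 (real n) + 1" using logK(2)[OF n1] unfolding K_def by simp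
  then have Mb: "real (2 + 2*M) \<le> 20 * l" unfolding M_def using logn l1 by simp
  have "real (outneighbours_cost V E \<pi> d) \<le> real (2 + 2*M) * real \<alpha> * real (size E)"
    using nat_bound by (metis of_nat_le_iff of_nat_mult)
  also have "\<dots> \<le> (20 * l) * real \<alpha> * real (size E)"
    using Mb by (intro mult_right_mono) auto
  finally show ?thesis unfolding l_def s_def \<alpha>_def by (simp add: algebra_simps)
qed

theorem theorem3p3:
  shows "\<exists>C::real. \<forall>V E \<pi> (\<delta>::real).
           temporal_network V E \<and> 0 \<le> \<delta> \<and> degeneracy_ordering V E \<pi> \<longrightarrow>
           real (outneighbours_cost V E \<pi> \<delta>)
             \<le> C * real (size E) * real (degeneracy V E) * max 1 (log 2 (real (sigma_max V E)))"
  using main by blast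

end
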